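(* Let $p$ be a prime and $G=S^1\times C_p$. There exists a continuous $G$-equivariant map $f_3:S(V_3)\to S(W_3)$, where $V_3=V_{1,1}\oplus V_{p,1}\oplus V_{p^2,1}$ and $W_3=V_{p^3,0}\oplus V_{0,1}$.
   Context: $S^1=\{t\in\mathbb{C}:|t|=1\}$, $C_p$ is cyclic of prime order $p$ with generator $a$, and elements of $G$ are written $ta^i$. Let $\xi_p=\exp(2\pi\sqrt{-1}/p)$. For $k\in\mathbb{Z}$ and $l\in\mathbb{Z}/p$, $V_{k,l}$ is the one-dimensional complex $G$-representation on $\mathbb{C}$ with $t\cdot z=t^kz$, $a\cdot z=\xi_p^lz$. $S(V)$ denotes the unit sphere of $V$. *)

theory Defs
  imports "HOL-Analysis.Analysis"
begin

definition xi :: "nat \<Rightarrow> complex" where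
  "xi p = exp (2 * of_real pi * \<i> / of_nat p)"

text \<open>Action of the element t a^i of G = S^1 x C_p on the one-dimensional
  representation V_{k,l}: z maps to t^k xi_p^(l i) z.  Here k is a natural number
  (all weights occurring below are nonnegative) and l is given by a natural representative.\<close>
definition actV :: "nat \<Rightarrow> nat \<Rightarrow> nat \<Rightarrow> complex \<Rightarrow> nat \<Rightarrow> complex \<Rightarrow> complex" where
  "actV p k l t i z = t ^ k * xi p ^ (l * i) * z"

text \<open>V_3 = V_{1,1} + V_{p,1} + V_{p^2,1}, realised on complex x complex x complex
  (the product norm is the Euclidean one).\<close>
definition actV3 :: "nat \<Rightarrow> complex \<Rightarrow> nat \<Rightarrow> complex \<times> complex \<times> complex \<Rightarrow> complex \<times> complex \<times> complex" where
  "actV3 p t i x = (case x of (z1, z2, z3) \<Rightarrow>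
     (actV p 1 1 t i z1, actV p p 1 t i z2, actV p (p^2) 1 t i z3))"

definition actW3 :: "nat \<Rightarrow> complex \<Rightarrow> nat \<Rightarrow> complex \<times> complex \<Rightarrow> complex \<times> complex" where
  "actW3 p t i w = (case w of (w1, w2) \<Rightarrow> (actV p (p^3) 0 t i w1, actV p 0 1 t i w2))"

end

theory Submission
  imports Defs
begin

definition mm :: "nat \<Rightarrow> complex \<Rightarrow> complex \<Rightarrow> complex" where
  "mm p z1 z2 = cnj z1 ^ p * z2"
definition rr :: "nat \<Rightarrow> complex \<Rightarrow> complex \<Rightarrow> real" where
  "rr p z1 z2 = norm (mm p z1 z2) ^ p - Re (mm p z1 z2 ^ p)"
definition uu :: "nat \<Rightarrow> complex \<Rightarrow> complex \<Rightarrow> complex" where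
  "uu p z1 z2 = mm p z1 z2 * of_real (rr p z1 z2)"
definition yy :: "nat \<Rightarrow> complex \<Rightarrow> complex \<Rightarrow> complex" where
  "yy p z1 z2 = z1 ^ (p^2) + z2 ^ p"
definition Phi :: "nat \<Rightarrow> complex \<times> complex \<times> complex \<Rightarrow> complex \<times> complex" where
  "Phi p x = (yy p (fst x) (fst (snd x)) ^ p - (- snd (snd x)) ^ p,
              cnj (yy p (fst x) (fst (snd x))) * snd (snd x) + uu p (fst x) (fst (snd x)))"

lemma rr_nonneg: "rr p z1 z2 \<ge> 0"
proof -
  have "Re (mm p z1 z2 ^ p) \<le> norm (mm p z1 z2 ^ p)" by (rule complex_Re_le_cmod)
  then show ?thesis by (simp add: rr_def norm_power)
qed

lemma cnj_mult_self: "cnj z * z = of_real (norm z ^ 2)"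
  by (metis complex_norm_square mult.commute)

lemma real_nonneg_Re: assumes "w = of_real r" "r \<ge> 0" shows "Re w = norm w"
  using assms by simp

lemma Phi_nonzero:
  assumes p: "p > 0" and nz: "(z1, z2, z3) \<noteq> (0, 0, 0)"
  shows "Phi p (z1, z2, z3) \<noteq> 0"
proof
  assume "Phi p (z1, z2, z3) = 0"
  define y where "y = yy p z1 z2"
  define m where "m = mm p z1 z2"
  define \<rho> where "\<rho> = rr p z1 z2"
  define u where "u = uu p z1 z2"
  have h1: "y ^ p = (- z3) ^ p" and h2: "cnj y * z3 + u = 0"
    using \<open>Phi p (z1, z2, z3) = 0\<close> by (auto simp: Phi_def y_def u_def zero_prod_def)
  have u_def2: "u = m * of_real \<rho>" by (simp add: u_def m_def \<rho>_def uu_def)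
  have rho0: "\<rho> \<ge> 0" by (simp add: \<rho>_def rr_nonneg)
  have "u = - (cnj y * z3)" using h2 by (simp add: eq_neg_iff_add_eq_0 add.commute)
  hence "u ^ p = cnj y ^ p * (- z3) ^ p"
    by (simp add: power_mult_distrib power_minus')
  also have "\<dots> = (cnj y * y) ^ p" using h1 by (simp add: power_mult_distrib)
  also have "\<dots> = of_real ((norm y ^ 2) ^ p)"
    by (simp only: cnj_mult_self of_real_power)
  finally have up: "u ^ p = of_real ((norm y ^ 2) ^ p)" .
  have up2: "u ^ p = m ^ p * of_real (\<rho> ^ p)" by (simp add: u_def2 power_mult_distrib)
  show False
  proof (cases "\<rho> = 0")
    case True
    hence "u = 0" by (simp add: u_def2)
    hence "of_real ((norm y ^ 2) ^ p) = (0::complex)" using up p by (simp add: zero_power)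
    hence "(norm y ^ 2) ^ p = 0" by (simp only: of_real_eq_0_iff)
    hence y0: "y = 0" using p by simp
    have "norm m ^ p = Re (m ^ p)" using True by (simp add: \<rho>_def rr_def m_def)
    have "z2 ^ p = - (z1 ^ (p^2))" using y0 by (simp add: y_def yy_def eq_neg_iff_add_eq_0 add.commute)
    hence "m ^ p = - (cnj z1 ^ (p^2) * z1 ^ (p^2))"
      by (simp add: m_def mm_def power_mult_distrib power2_eq_square power_mult)
    also have "\<dots> = - of_real ((norm z1 ^ 2) ^ (p^2))"
      by (simp only: cnj_mult_self of_real_power flip: power_mult_distrib)
    finally have mp: "m ^ p = - of_real ((norm z1 ^ 2) ^ (p^2))" .
    hence "Re (m ^ p) \<le> 0" by simp
    with \<open>norm m ^ p = Re (m ^ p)\<close> have "norm m ^ p \<le> 0" by simp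
    moreover have "norm m ^ p \<ge> 0" by simp
    ultimately have "norm m ^ p = 0" by linarith
    hence "m = 0" by simp
    hence "- of_real ((norm z1 ^ 2) ^ (p^2)) = (0::complex)" using mp p by (simp add: zero_power)
    hence "(norm z1 ^ 2) ^ (p^2) = 0" by (simp only: neg_equal_0_iff_equal of_real_eq_0_iff)
    hence z10: "z1 = 0" by simp
    moreover have "p^2 > 0" using p by simp
    ultimately have "z2 ^ p = 0" using \<open>z2 ^ p = - (z1 ^ (p^2))\<close> by (simp add: zero_power)
    hence "z2 = 0" by simp
    have "norm z3 ^ p = norm y ^ p" using h1 by (metis norm_minus_cancel norm_power)
    hence "z3 = 0" using y0 p by (simp add: zero_power)
    with z10 \<open>z2 = 0\<close> nz show False by simp
  next
    case False
    hence rpos: "\<rho> > 0" using rho0 by simp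
    have "m ^ p = of_real ((norm y ^ 2) ^ p / \<rho> ^ p)"
      using up up2 rpos by (simp add: field_simps)
    hence "Re (m ^ p) = norm (m ^ p)"
      by (rule real_nonneg_Re) (use rpos in simp)
    hence "\<rho> = 0" by (simp add: \<rho>_def rr_def m_def norm_power)
    with False show False by simp
  qed
qed


lemma xi_pow: assumes "p > 0" shows "xi p ^ p = 1"
proof -
  have "xi p ^ p = exp (of_nat p * (2 * of_real pi * \<i> / of_nat p))"
    by (simp only: xi_def exp_of_nat_mult)
  also have "\<dots> = exp (2 * of_real pi * \<i>)" using assms by simp
  also have "\<dots> = 1" by simp
  finally show ?thesis .
qed

lemma norm_xi: "norm (xi p) = 1"
  by (simp add: xi_def)

lemma yy_act:
  assumes "e ^ p = 1"
  shows "yy p (t * e * z1) (t ^ p * e * z2) = t ^ (p^2) * yy p z1 z2"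
proof -
  have "e ^ (p^2) = 1" using assms by (simp add: power2_eq_square power_mult)
  then show ?thesis using assms
    by (simp add: yy_def power_mult_distrib power2_eq_square power_mult[symmetric] algebra_simps)
qed

lemma mm_act:
  assumes "e ^ p = 1" "cnj t * t = 1"
  shows "mm p (t * e * z1) (t ^ p * e * z2) = e * mm p z1 z2"
proof -
  have "cnj e ^ p = 1" using assms(1) by (metis complex_cnj_one complex_cnj_power)
  have "mm p (t * e * z1) (t ^ p * e * z2) = (cnj t * t) ^ p * cnj e ^ p * e * (cnj z1 ^ p * z2)"
    by (simp add: mm_def power_mult_distrib algebra_simps)
  also have "\<dots> = e * mm p z1 z2" using assms \<open>cnj e ^ p = 1\<close> by (simp add: mm_def)
  finally show ?thesis .
qed

lemma rr_act:
  assumes "e ^ p = 1" "cnj t * t = 1" "norm e = 1"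
  shows "rr p (t * e * z1) (t ^ p * e * z2) = rr p z1 z2"
  using assms by (simp add: rr_def mm_act norm_mult power_mult_distrib)

lemma uu_act:
  assumes "e ^ p = 1" "cnj t * t = 1" "norm e = 1"
  shows "uu p (t * e * z1) (t ^ p * e * z2) = e * uu p z1 z2"
  using assms by (simp add: uu_def mm_act rr_act)

lemma Phi_act:
  assumes "e ^ p = 1" "cnj t * t = 1" "norm e = 1"
  shows "Phi p (t * e * z1, t ^ p * e * z2, t ^ (p^2) * e * z3)
     = (t ^ (p^3) * fst (Phi p (z1, z2, z3)), e * snd (Phi p (z1, z2, z3)))"
proof -
  have c2: "cnj (t ^ (p^2)) * t ^ (p^2) = 1" using assms(2)
    by (metis complex_cnj_power power_mult_distrib power_one)
  have p3: "(t ^ (p^2)) ^ p = t ^ (p^3)" by (simp add: power_mult[symmetric] power3_eq_cube power2_eq_square)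
  have a: "(t ^ (p^2) * yy p z1 z2) ^ p - (- (t ^ (p^2) * e * z3)) ^ p
      = t ^ (p^3) * (yy p z1 z2 ^ p - (- z3) ^ p)"
  proof -
    have "(- (t ^ (p^2) * e * z3)) ^ p = (t ^ (p^2)) ^ p * e ^ p * (- z3) ^ p"
      by (simp add: power_mult_distrib[symmetric])
    then show ?thesis using assms(1) p3 by (simp add: power_mult_distrib right_diff_distrib)
  qed
  have b: "cnj (t ^ (p^2) * yy p z1 z2) * (t ^ (p^2) * e * z3) + e * uu p z1 z2
      = e * (cnj (yy p z1 z2) * z3 + uu p z1 z2)"
  proof -
    have "cnj (t ^ (p^2) * yy p z1 z2) * (t ^ (p^2) * e * z3)
        = (cnj (t ^ (p^2)) * t ^ (p^2)) * e * (cnj (yy p z1 z2) * z3)"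
      by (simp only: complex_cnj_mult) (simp add: algebra_simps)
    then show ?thesis using c2 by (simp add: algebra_simps)
  qed
  show ?thesis
    using a b by (simp add: Phi_def yy_act[OF assms(1)] uu_act[OF assms])
qed

theorem proposition2p2:
  fixes p :: nat
  assumes "prime p"
  shows "\<exists>f :: complex \<times> complex \<times> complex \<Rightarrow> complex \<times> complex.
           continuous_on (sphere 0 1) f \<and> f ` sphere 0 1 \<subseteq> sphere 0 1 \<and>
           (\<forall>t i x. norm t = 1 \<and> i < p \<and> x \<in> sphere 0 1 \<longrightarrow>
               f (actV3 p t i x) = actW3 p t i (f x))"
proof -
  have p: "p > 0" using assms prime_gt_0_nat by blast
  have nz: "Phi p x \<noteq> 0" if "x \<in> sphere 0 1" for x
  proof -
    obtain z1 z2 z3 where x: "x = (z1, z2, z3)" by (cases x) auto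
    have "x \<noteq> 0" using that by auto
    then show ?thesis using Phi_nonzero[OF p, of z1 z2 z3] x by (simp add: zero_prod_def)
  qed
  define f where "f x = (1 / norm (Phi p x)) *\<^sub>R Phi p x" for x
  have cont: "continuous_on UNIV (Phi p)"
    unfolding Phi_def yy_def uu_def rr_def mm_def
    by (intro continuous_intros)
  have "continuous_on (sphere 0 1) f"
    unfolding f_def
    by (intro continuous_intros continuous_on_subset[OF cont]) (auto simp: nz)
  moreover have "f ` sphere 0 1 \<subseteq> sphere 0 1"
    using nz by (auto simp: f_def)
  moreover have "f (actV3 p t i x) = actW3 p t i (f x)"
    if t: "norm t = 1" and x1: "x \<in> sphere 0 1" for t i x
  proof -
    obtain z1 z2 z3 where x: "x = (z1, z2, z3)" by (cases x) auto
    define e where "e = xi p ^ i"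
    have "(xi p ^ i) ^ p = (xi p ^ p) ^ i" by (simp add: power_mult[symmetric] mult.commute)
    hence e1: "e ^ p = 1" unfolding e_def using xi_pow[OF p] by simp
    have e2: "norm e = 1" by (simp add: e_def norm_power norm_xi)
    have t2: "cnj t * t = 1" using t cnj_mult_self[of t] by simp
    have act: "actV3 p t i x = (t * e * z1, t ^ p * e * z2, t ^ (p^2) * e * z3)"
      by (simp add: actV3_def actV_def x e_def)
    obtain w1 w2 where w: "Phi p x = (w1, w2)" by (cases "Phi p x") auto
    have PA: "Phi p (actV3 p t i x) = (t ^ (p^3) * w1, e * w2)"
      using Phi_act[OF e1 t2 e2, of z1 z2 z3] act w x by simp
    have W: "actW3 p t i (a, b) = (t ^ (p^3) * a, e * b)" for a b
      by (simp add: actW3_def actV_def e_def)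
    have nrm: "norm (t ^ (p^3) * w1, e * w2) = norm (w1, w2)"
      by (simp add: norm_Pair norm_mult norm_power t e2)
    show ?thesis
      unfolding f_def PA w W nrm
      by (simp add: W scaleR_conv_of_real algebra_simps)
  qed
  ultimately show ?thesis by blast
qed

end
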